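(* Consider the system of ordinary differential equations for $(x(t),h(t),n(t))$: \[ \frac{dx}{dt} = x(1-x)S(h) + \mu(h)(1-x) - \nu x,\qquad \frac{dh}{dt} = \alpha n(1+\beta x)\,G(h) - \Gamma(n)(h-1),\qquad \frac{dn}{dt} = r n(1-n) - D(h,x)\,n, \] where \[ S(h) = \frac{s_0}{1+e^{-\lambda(h-h_c)}} - c + \varphi\, d_S(h),\quad d_S(h) = \frac{d_{\max} h^m}{h_{50}^m + h^m},\quad \mu(h)=\mu_0 h^p, \] \[ G(h) = \frac{K_g}{K_g+h},\quad \Gamma(n) = \frac{\gamma_0}{1+\eta n},\quad D(h,x) = (1-\varphi x)\,d_S(h), \] and all parameters $s_0,\lambda,h_c,c,\varphi,d_{\max},h_{50},m,\mu_0,p,\nu,\alpha,\beta,K_g,\gamma_0,\eta,r$ are positive, with $\varphi\le 1$. Let $\mathcal{D} = [0,1]\times(0,\infty)\times[0,1]$. Then for every initial condition $(x_0,h_0,n_0)\in\mathcal{D}$ the system admits a unique solution $(x(t),h(t),n(t))$ defined for all $t\ge 0$, and this solution remains in $\mathcal{D}$ for all $t\ge 0$.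
   Context: The model describes a tumor: $x$ is the fraction of acid-resistant cells, $h$ is the proton concentration normalized by its physiological value (so $h=1$ is physiological pH), and $n$ is tumor density normalized by carrying capacity. *)

theory Defs
  imports "HOL-Analysis.Analysis"
begin

record params =
  s0 :: real  lam :: real  hc :: real  cc :: real  phi :: real
  dmax :: real  h50 :: real  mm :: real  mu0 :: real  pp :: real
  nu :: real  alpha :: real  beta :: real  Kg :: real  gamma0 :: real
  eta :: real  rr :: real

definition params_ok :: "params \<Rightarrow> bool" where
  "params_ok P \<longleftrightarrow> s0 P > 0 \<and> lam P > 0 \<and> hc P > 0 \<and> cc P > 0 \<and> phi P > 0 \<and>
     dmax P > 0 \<and> h50 P > 0 \<and> mm P > 0 \<and> mu0 P > 0 \<and> pp P > 0 \<and> nu P > 0 \<and>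
     alpha P > 0 \<and> beta P > 0 \<and> Kg P > 0 \<and> gamma0 P > 0 \<and> eta P > 0 \<and> rr P > 0 \<and>
     phi P \<le> 1"

definition dS :: "params \<Rightarrow> real \<Rightarrow> real" where
  "dS P h = dmax P * h powr mm P / (h50 P powr mm P + h powr mm P)"

definition Sf :: "params \<Rightarrow> real \<Rightarrow> real" where
  "Sf P h = s0 P / (1 + exp (- lam P * (h - hc P))) - cc P + phi P * dS P h"

definition muf :: "params \<Rightarrow> real \<Rightarrow> real" where
  "muf P h = mu0 P * h powr pp P"

definition Gf :: "params \<Rightarrow> real \<Rightarrow> real" where
  "Gf P h = Kg P / (Kg P + h)"

definition Gammaf :: "params \<Rightarrow> real \<Rightarrow> real" where
  "Gammaf P n = gamma0 P / (1 + eta P * n)"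

definition Df :: "params \<Rightarrow> real \<Rightarrow> real \<Rightarrow> real" where
  "Df P h x = (1 - phi P * x) * dS P h"

definition fx :: "params \<Rightarrow> real \<Rightarrow> real \<Rightarrow> real \<Rightarrow> real" where
  "fx P x h n = x * (1 - x) * Sf P h + muf P h * (1 - x) - nu P * x"

definition fh :: "params \<Rightarrow> real \<Rightarrow> real \<Rightarrow> real \<Rightarrow> real" where
  "fh P x h n = alpha P * n * (1 + beta P * x) * Gf P h - Gammaf P n * (h - 1)"

definition fn :: "params \<Rightarrow> real \<Rightarrow> real \<Rightarrow> real \<Rightarrow> real" where
  "fn P x h n = rr P * n * (1 - n) - Df P h x * n"

definition is_solution :: "params \<Rightarrow> (real \<Rightarrow> real) \<Rightarrow> (real \<Rightarrow> real) \<Rightarrow> (real \<Rightarrow> real) \<Rightarrow> bool" where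
  "is_solution P x h n \<longleftrightarrow> (\<forall>t\<ge>0.
      (x has_real_derivative fx P (x t) (h t) (n t)) (at t within {0..}) \<and>
      (h has_real_derivative fh P (x t) (h t) (n t)) (at t within {0..}) \<and>
      (n has_real_derivative fn P (x t) (h t) (n t)) (at t within {0..}))"

end

theory Submission
  imports Defs
begin

lemma exp_integral:
  fixes k u :: real assumes "k > 0" "u \<ge> 0"
  shows "integral {0..u} (\<lambda>s. exp (k* s)) = (exp (k * u) - 1) / k"
proof -
  have "((\<lambda>s. exp (k* s)) has_integral (exp (k * u)/k - exp (k*0)/k)) {0..u}"
    apply (rule fundamental_theorem_of_calculus)
    using assms apply simp
    apply (rule has_vector_derivative_at_within)
    apply (subst has_real_derivative_iff_has_vector_derivative[symmetric])
    using assms by (auto intro!: derivative_eq_intros)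
  then show ?thesis using assms by (simp add: integral_unique diff_divide_distrib)
qed

lemma global_existence:
  fixes F :: "'a::euclidean_space \<Rightarrow> 'a"
  assumes lip: "\<And>y z. norm (F y - F z) \<le> L * norm (y - z)" and L: "L > 0"
    and bnd: "\<And>y. norm (F y) \<le> M"
  shows "\<exists>\<phi>. \<phi> 0 = y0 \<and> (\<forall>t\<ge>0. (\<phi> has_vector_derivative F (\<phi> t)) (at t within {0..}))"
proof -
  define k where "k = 2 * L"
  have k: "k > 0" using L by (simp add: k_def)
  have M0: "M \<ge> 0" using bnd[of 0] norm_ge_zero[of "F 0"] by linarith
  have contF: "continuous_on UNIV F"
    apply (rule lipschitz_on_continuous_on[of L])
    apply (rule lipschitz_onI)
    using lip L by (auto simp: dist_norm)
  define g where "g \<psi> s = F (exp (k* s) *\<^sub>R apply_bcontfun \<psi> s)" for \<psi> :: "real \<Rightarrow>\<^sub>C 'a" and s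
  have contg: "continuous_on A (g \<psi>)" for \<psi> A
    unfolding g_def
    by (rule continuous_on_compose2[OF contF]) (auto intro!: continuous_intros)
  have intg: "g \<psi> integrable_on {a..b}" for \<psi> a b
    by (rule integrable_continuous_interval[OF contg])
  define \<Phi>f where "\<Phi>f \<psi> t = exp (-k * max 0 t) *\<^sub>R (y0 + integral {0..max 0 t} (g \<psi>))" for \<psi> t
  have cont_I: "continuous_on UNIV (\<lambda>t. integral {0..max 0 t} (g \<psi>))" for \<psi>
  proof -
    have "isCont (\<lambda>t. integral {0..max 0 t} (g \<psi>)) t" for t :: real
    proof -
      let ?S = "{-(\<bar>t\<bar>+1)..\<bar>t\<bar>+1}"
      have "continuous_on ?S (\<lambda>t. integral {0..max 0 t} (g \<psi>))"
        apply (rule continuous_on_compose2[of "{0..\<bar>t\<bar>+1}" "\<lambda>u. integral {0..u} (g \<psi>)"])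
        apply (rule indefinite_integral_continuous_1[OF intg])
        by (auto intro!: continuous_intros)
      moreover have "t \<in> interior ?S" by auto
      ultimately show ?thesis by (rule continuous_on_interior)
    qed
    then show ?thesis by (simp add: continuous_on_eq_continuous_at)
  qed
  have bcf: "\<Phi>f \<psi> \<in> bcontfun" for \<psi>
  proof (rule bcontfun_normI)
    show "continuous_on UNIV (\<Phi>f \<psi>)"
      unfolding \<Phi>f_def by (intro continuous_intros cont_I)
    fix t :: real
    define u where "u = max 0 t"
    have u: "u \<ge> 0" by (simp add: u_def)
    have "norm (integral {0..u} (g \<psi>)) \<le> integral {0..u} (\<lambda>_. M)"
      apply (rule integral_norm_bound_integral[OF intg])
      using bnd by (auto simp: g_def)
    also have "\<dots> = M * u" using u by simp
    finally have nI: "norm (integral {0..u} (g \<psi>)) \<le> M * u" .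
    have e1: "exp (-k * u) \<le> 1" using k u by simp
    have "1 + k * u \<le> exp (k * u)" by (rule exp_ge_add_one_self)
    hence "k * u \<le> exp (k * u)" by linarith
    hence "k * u * exp (-k * u) \<le> exp (k * u) * exp (-k * u)"
      by (intro mult_right_mono) auto
    also have "\<dots> = 1" by (simp add: exp_minus_inverse)
    finally have ku: "k * u * exp (-k * u) \<le> 1" .
    have "exp (-k * u) * (M * u) = (M / k) * (k * u * exp (-k * u))" using k by (simp add: field_simps)
    also have "\<dots> \<le> (M / k) * 1" by (rule mult_left_mono[OF ku]) (use M0 k in auto)
    finally have e2: "exp (-k * u) * (M * u) \<le> M / k" by simp
    have "norm (\<Phi>f \<psi> t) = exp (-k * u) * norm (y0 + integral {0..u} (g \<psi>))"
      by (simp add: \<Phi>f_def u_def)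
    also have "\<dots> \<le> exp (-k * u) * (norm y0 + M*u)"
      apply (rule mult_left_mono)
      using nI norm_triangle_ineq[of y0 "integral {0..u} (g \<psi>)"] by auto
    also have "\<dots> \<le> norm y0 + M / k"
    proof -
      have "exp (-k * u) * norm y0 \<le> norm y0" by (rule mult_left_le_one_le) (use e1 in auto)
      then show ?thesis using e2 by (simp add: distrib_left)
    qed
    finally show "norm (\<Phi>f \<psi> t) \<le> norm y0 + M / k" .
  qed
  define \<Phi> where "\<Phi> \<psi> = Bcontfun (\<Phi>f \<psi>)" for \<psi>
  have \<Phi>ap: "apply_bcontfun (\<Phi> \<psi>) = \<Phi>f \<psi>" for \<psi>
    unfolding \<Phi>_def using bcf by (simp add: Bcontfun_inverse)
  have contr: "dist (\<Phi> \<psi>1) (\<Phi> \<psi>2) \<le> (1/2) * dist \<psi>1 \<psi>2" for \<psi>1 \<psi>2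
  proof (rule dist_bound)
    fix t :: real
    define D where "D = dist \<psi>1 \<psi>2"
    define u where "u = max 0 t"
    have u: "u \<ge> 0" by (simp add: u_def)
    have D0: "D \<ge> 0" by (simp add: D_def)
    have "\<Phi>f \<psi>1 t - \<Phi>f \<psi>2 t = exp (-k * u) *\<^sub>R (integral {0..u} (g \<psi>1) - integral {0..u} (g \<psi>2))"
      by (simp add: \<Phi>f_def u_def algebra_simps)
    also have "\<dots> = exp (-k * u) *\<^sub>R integral {0..u} (\<lambda>s. g \<psi>1 s - g \<psi>2 s)"
      by (simp add: integral_diff[OF intg intg])
    finally have eq: "\<Phi>f \<psi>1 t - \<Phi>f \<psi>2 t = exp (-k * u) *\<^sub>R integral {0..u} (\<lambda>s. g \<psi>1 s - g \<psi>2 s)" .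
    have "norm (integral {0..u} (\<lambda>s. g \<psi>1 s - g \<psi>2 s)) \<le> integral {0..u} (\<lambda>s. (L*D) * exp (k* s))"
    proof (rule integral_norm_bound_integral)
      show "(\<lambda>s. g \<psi>1 s - g \<psi>2 s) integrable_on {0..u}" by (intro integrable_diff intg)
      show "(\<lambda>s. (L*D) * exp (k* s)) integrable_on {0..u}"
        by (rule integrable_continuous_interval) (auto intro!: continuous_intros)
      fix s assume "s \<in> {0..u}"
      have "norm (g \<psi>1 s - g \<psi>2 s) \<le> L * norm (exp (k* s) *\<^sub>R apply_bcontfun \<psi>1 s - exp (k* s) *\<^sub>R apply_bcontfun \<psi>2 s)"
        unfolding g_def by (rule lip)
      also have "\<dots> = L * (exp (k* s) * dist (apply_bcontfun \<psi>1 s) (apply_bcontfun \<psi>2 s))"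
        by (simp add: dist_norm flip: scaleR_diff_right)
      also have "\<dots> \<le> L * (exp (k* s) * D)"
        unfolding D_def using L by (intro mult_left_mono dist_bounded) auto
      finally show "norm (g \<psi>1 s - g \<psi>2 s) \<le> (L*D) * exp (k* s)" by (simp add: algebra_simps)
    qed
    also have "\<dots> = (L*D) * ((exp (k * u) - 1) / k)"
      using exp_integral[OF k u] by simp
    finally have nb: "norm (integral {0..u} (\<lambda>s. g \<psi>1 s - g \<psi>2 s)) \<le> (L*D) * ((exp (k * u) - 1) / k)" .
    have "dist (\<Phi>f \<psi>1 t) (\<Phi>f \<psi>2 t) = exp (-k * u) * norm (integral {0..u} (\<lambda>s. g \<psi>1 s - g \<psi>2 s))"
      by (simp add: dist_norm eq)
    also have "\<dots> \<le> exp (-k * u) * ((L*D) * ((exp (k * u) - 1) / k))"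
      by (rule mult_left_mono[OF nb]) simp
    also have "\<dots> = (D/2) * (1 - exp (-k * u))"
    proof -
      have ee: "exp (-k * u) * exp (k * u) = 1" by (simp flip: exp_add)
      have "exp (-k * u) * ((L*D) * ((exp (k * u) - 1) / k)) = (L*D/k) * (exp (-k * u) * exp (k * u) - exp (-k * u))"
        by (simp add: algebra_simps diff_divide_distrib)
      also have "\<dots> = (D/2) * (1 - exp (-k * u))" using L by (simp only: ee) (simp add: k_def)
      finally show ?thesis .
    qed
    also have "\<dots> \<le> D/2" using D0 by (simp add: mult_left_le)
    finally show "dist (\<Phi> \<psi>1 t) (\<Phi> \<psi>2 t) \<le> 1/2 * dist \<psi>1 \<psi>2" by (simp add: \<Phi>ap D_def)
  qed
  obtain \<psi> where fix\<psi>: "\<Phi> \<psi> = \<psi>"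
    using banach_fix_type[of "1/2" \<Phi>] contr by auto
  define J where "J u = integral {-1..u} (g \<psi>)" for u
  define \<phi> where "\<phi> t = y0 + integral {0..t} (g \<psi>)" for t
  have \<phi>eq: "\<phi> t = exp (k * t) *\<^sub>R apply_bcontfun \<psi> t" if "t \<ge> 0" for t
  proof -
    have "apply_bcontfun \<psi> t = \<Phi>f \<psi> t" using fix\<psi> \<Phi>ap by metis
    then have "exp (k * t) *\<^sub>R apply_bcontfun \<psi> t = exp (k * t) *\<^sub>R \<Phi>f \<psi> t" by simp
    also have "\<dots> = (exp (k * t) * exp (-k * t)) *\<^sub>R (y0 + integral {0..t} (g \<psi>))"
      using that by (simp add: \<Phi>f_def)
    also have "exp (k * t) * exp (-k * t) = 1" by (simp flip: exp_add)
    also have "1 *\<^sub>R (y0 + integral {0..t} (g \<psi>)) = \<phi> t" by (simp add: \<phi>_def)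
    finally show ?thesis by simp
  qed
  have \<phi>J: "\<phi> u = y0 + J u - J 0" if "u \<in> {0..}" for u
  proof -
    have "integral {-1..0} (g \<psi>) + integral {0..u} (g \<psi>) = integral {-1..u} (g \<psi>)"
      by (rule Henstock_Kurzweil_Integration.integral_combine[OF _ _ intg]) (use that in auto)
    then have "J 0 + integral {0..u} (g \<psi>) = J u" by (simp only: J_def)
    then show ?thesis unfolding \<phi>_def by (simp add: algebra_simps)
  qed
  have "\<forall>t\<ge>0. (\<phi> has_vector_derivative F (\<phi> t)) (at t within {0..})"
  proof (intro allI impI)
    fix t :: real assume t: "t \<ge> 0"
    have "(J has_vector_derivative g \<psi> t) (at t within {-1..t+1})"
      unfolding J_def by (rule integral_has_vector_derivative[OF contg]) (use t in auto)
    moreover have "at t within {-1..t+1} = at t" by (rule at_within_interior) (use t in auto)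
    ultimately have "(J has_vector_derivative g \<psi> t) (at t)" by simp
    then have "((\<lambda>u. y0 + J u) has_vector_derivative (0 + g \<psi> t)) (at t)"
      by (rule has_vector_derivative_add[OF has_vector_derivative_const])
    then have "((\<lambda>u. y0 + J u - J 0) has_vector_derivative (0 + g \<psi> t - 0)) (at t)"
      by (rule has_vector_derivative_diff[OF _ has_vector_derivative_const])
    then have "((\<lambda>u. y0 + J u - J 0) has_vector_derivative g \<psi> t) (at t within {0..})"
      using has_vector_derivative_at_within by fastforce
    then have "(\<phi> has_vector_derivative g \<psi> t) (at t within {0..})"
    proof (rule has_vector_derivative_transform[rotated 2])
      show "t \<in> {0..}" using t by simp
      fix x :: real assume "x \<in> {0..}"
      then show "\<phi> x = y0 + J x - J 0" by (rule \<phi>J)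
    qed
    moreover have "g \<psi> t = F (\<phi> t)" using \<phi>eq[OF t] by (simp add: g_def)
    ultimately show "(\<phi> has_vector_derivative F (\<phi> t)) (at t within {0..})" by simp
  qed
  moreover have "\<phi> 0 = y0" by (simp add: \<phi>_def)
  ultimately show ?thesis by blast
qed

type_synonym st = "real \<times> real \<times> real"

definition dd :: "st \<Rightarrow> st \<Rightarrow> real" where
  "dd p q = \<bar>fst p - fst q\<bar> + \<bar>fst (snd p) - fst (snd q)\<bar> + \<bar>snd (snd p) - snd (snd q)\<bar>"

lemma dd_nonneg: "dd p q \<ge> 0" by (simp add: dd_def)

definition LB :: "st set \<Rightarrow> (st \<Rightarrow> real) \<Rightarrow> bool" where
  "LB S g \<longleftrightarrow> (\<exists>K. \<forall>p\<in>S. \<bar>g p\<bar> \<le> K) \<and> (\<exists>L. \<forall>p\<in>S. \<forall>q\<in>S. \<bar>g p - g q\<bar> \<le> L * dd p q)"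

lemma LBE:
  assumes "LB S g"
  obtains K L where "K \<ge> 0" "L \<ge> 0" "\<And>p. p \<in> S \<Longrightarrow> \<bar>g p\<bar> \<le> K"
    "\<And>p q. p \<in> S \<Longrightarrow> q \<in> S \<Longrightarrow> \<bar>g p - g q\<bar> \<le> L * dd p q"
proof -
  obtain K L where K: "\<forall>p\<in>S. \<bar>g p\<bar> \<le> K" and L: "\<forall>p\<in>S. \<forall>q\<in>S. \<bar>g p - g q\<bar> \<le> L * dd p q"
    using assms unfolding LB_def by blast
  have "\<bar>g p\<bar> \<le> max K 0" if "p \<in> S" for p using K that by force
  moreover have "\<bar>g p - g q\<bar> \<le> max L 0 * dd p q" if "p \<in> S" "q \<in> S" for p q
  proof -
    have "L * dd p q \<le> max L 0 * dd p q" by (rule mult_right_mono) (auto simp: dd_nonneg)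
    then show ?thesis using L that by force
  qed
  ultimately show ?thesis using that[of "max K 0" "max L 0"] by auto
qed

lemma LBI:
  assumes "\<And>p. p \<in> S \<Longrightarrow> \<bar>g p\<bar> \<le> K" "\<And>p q. p \<in> S \<Longrightarrow> q \<in> S \<Longrightarrow> \<bar>g p - g q\<bar> \<le> L * dd p q"
  shows "LB S g"
  using assms unfolding LB_def by blast

lemma LB_const: "LB S (\<lambda>p. c)"
  by (rule LBI[of _ _ "\<bar>c\<bar>" 0]) (auto simp: dd_nonneg)

definition bnd3 :: "st set \<Rightarrow> bool" where
  "bnd3 S \<longleftrightarrow> (\<exists>K. \<forall>p\<in>S. \<bar>fst p\<bar> \<le> K \<and> \<bar>fst (snd p)\<bar> \<le> K \<and> \<bar>snd (snd p)\<bar> \<le> K)"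

lemma LB_x: "bnd3 S \<Longrightarrow> LB S (\<lambda>p. fst p)"
  unfolding bnd3_def
  apply (elim exE)
  subgoal for K by (rule LBI[of _ _ K 1]) (auto simp: dd_def)
  done

lemma LB_h: "bnd3 S \<Longrightarrow> LB S (\<lambda>p. fst (snd p))"
  unfolding bnd3_def
  apply (elim exE)
  subgoal for K by (rule LBI[of _ _ K 1]) (auto simp: dd_def)
  done

lemma LB_n: "bnd3 S \<Longrightarrow> LB S (\<lambda>p. snd (snd p))"
  unfolding bnd3_def
  apply (elim exE)
  subgoal for K by (rule LBI[of _ _ K 1]) (auto simp: dd_def)
  done

lemma LB_add: assumes "LB S a" "LB S b" shows "LB S (\<lambda>p. a p + b p)"
proof -
  obtain Ka La where a: "\<And>p. p \<in> S \<Longrightarrow> \<bar>a p\<bar> \<le> Ka" "\<And>p q. p \<in> S \<Longrightarrow> q \<in> S \<Longrightarrow> \<bar>a p - a q\<bar> \<le> La * dd p q"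
    using LBE[OF assms(1)] by metis
  obtain Kb Lb where b: "\<And>p. p \<in> S \<Longrightarrow> \<bar>b p\<bar> \<le> Kb" "\<And>p q. p \<in> S \<Longrightarrow> q \<in> S \<Longrightarrow> \<bar>b p - b q\<bar> \<le> Lb * dd p q"
    using LBE[OF assms(2)] by metis
  show ?thesis
  proof (rule LBI[of _ _ "Ka + Kb" "La + Lb"])
    fix p assume "p \<in> S" then show "\<bar>a p + b p\<bar> \<le> Ka + Kb" using a b by (smt (verit))
  next
    fix p q assume "p \<in> S" "q \<in> S"
    then show "\<bar>a p + b p - (a q + b q)\<bar> \<le> (La + Lb) * dd p q"
      using a(2)[of p q] b(2)[of p q] by (simp add: distrib_right)
  qed
qed

lemma LB_minus: assumes "LB S a" shows "LB S (\<lambda>p. - a p)"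
proof -
  obtain Ka La where a: "\<And>p. p \<in> S \<Longrightarrow> \<bar>a p\<bar> \<le> Ka" "\<And>p q. p \<in> S \<Longrightarrow> q \<in> S \<Longrightarrow> \<bar>a p - a q\<bar> \<le> La * dd p q"
    using LBE[OF assms(1)] by metis
  show ?thesis
    by (rule LBI[of _ _ Ka La]) (use a in \<open>auto simp: abs_minus_commute\<close>)
qed

lemma LB_diff: assumes "LB S a" "LB S b" shows "LB S (\<lambda>p. a p - b p)"
  using LB_add[OF assms(1) LB_minus[OF assms(2)]] by simp

lemma LB_mult: assumes "LB S a" "LB S b" shows "LB S (\<lambda>p. a p * b p)"
proof -
  obtain Ka La where a: "Ka \<ge> 0" "La \<ge> 0" "\<And>p. p \<in> S \<Longrightarrow> \<bar>a p\<bar> \<le> Ka" "\<And>p q. p \<in> S \<Longrightarrow> q \<in> S \<Longrightarrow> \<bar>a p - a q\<bar> \<le> La * dd p q"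
    using LBE[OF assms(1)] by metis
  obtain Kb Lb where b: "Kb \<ge> 0" "Lb \<ge> 0" "\<And>p. p \<in> S \<Longrightarrow> \<bar>b p\<bar> \<le> Kb" "\<And>p q. p \<in> S \<Longrightarrow> q \<in> S \<Longrightarrow> \<bar>b p - b q\<bar> \<le> Lb * dd p q"
    using LBE[OF assms(2)] by metis
  show ?thesis
  proof (rule LBI[of _ _ "Ka * Kb" "Ka * Lb + Kb * La"])
    fix p assume p: "p \<in> S"
    have "\<bar>a p * b p\<bar> = \<bar>a p\<bar> * \<bar>b p\<bar>" by (simp add: abs_mult)
    also have "\<dots> \<le> Ka * Kb" by (rule mult_mono) (use a b p in auto)
    finally show "\<bar>a p * b p\<bar> \<le> Ka * Kb" .
  next
    fix p q assume p: "p \<in> S" and q: "q \<in> S"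
    have "a p * b p - a q * b q = a p * (b p - b q) + b q * (a p - a q)" by (simp add: algebra_simps)
    then have "\<bar>a p * b p - a q * b q\<bar> \<le> \<bar>a p\<bar> * \<bar>b p - b q\<bar> + \<bar>b q\<bar> * \<bar>a p - a q\<bar>"
      by (metis abs_mult abs_triangle_ineq)
    also have "\<dots> \<le> Ka * (Lb * dd p q) + Kb * (La * dd p q)"
      by (intro add_mono mult_mono) (use a b p q in \<open>auto simp: dd_nonneg\<close>)
    finally show "\<bar>a p * b p - a q * b q\<bar> \<le> (Ka * Lb + Kb * La) * dd p q" by (simp add: algebra_simps)
  qed
qed

lemma LB_inverse: assumes "LB S b" "c > 0" "\<And>p. p \<in> S \<Longrightarrow> b p \<ge> c"
  shows "LB S (\<lambda>p. 1 / b p)"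
proof -
  obtain Kb Lb where b: "Kb \<ge> 0" "Lb \<ge> 0" "\<And>p. p \<in> S \<Longrightarrow> \<bar>b p\<bar> \<le> Kb" "\<And>p q. p \<in> S \<Longrightarrow> q \<in> S \<Longrightarrow> \<bar>b p - b q\<bar> \<le> Lb * dd p q"
    using LBE[OF assms(1)] by metis
  show ?thesis
  proof (rule LBI[of _ _ "1 / c" "Lb / (c * c)"])
    fix p assume p: "p \<in> S"
    then have "b p \<ge> c" by (rule assms(3))
    then show "\<bar>1 / b p\<bar> \<le> 1 / c" using assms(2) by (simp add: frac_le)
  next
    fix p q assume p: "p \<in> S" and q: "q \<in> S"
    have bp: "b p \<ge> c" "b q \<ge> c" using assms(3) p q by auto
    have "1 / b p - 1 / b q = (b q - b p) / (b p * b q)" using bp assms(2) by (simp add: field_simps)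
    then have "\<bar>1 / b p - 1 / b q\<bar> = \<bar>b p - b q\<bar> / (b p * b q)"
      using bp assms(2) by (simp add: abs_minus_commute)
    also have "\<dots> \<le> (Lb * dd p q) / (c * c)"
      apply (rule frac_le)
      using b(2) b(4)[OF p q] bp assms(2) by (auto simp: dd_nonneg intro: mult_mono)
    finally show "\<bar>1 / b p - 1 / b q\<bar> \<le> Lb / (c * c) * dd p q" by simp
  qed
qed

lemma LB_divide: assumes "LB S a" "LB S b" "c > 0" "\<And>p. p \<in> S \<Longrightarrow> b p \<ge> c"
  shows "LB S (\<lambda>p. a p / b p)"
  using LB_mult[OF assms(1) LB_inverse[OF assms(2-4)]] by simp

lemma lip_scalar:
  fixes \<phi> \<phi>' :: "real \<Rightarrow> real"
  assumes ab: "a \<le> b" and der: "\<And>u. u \<in> {a..b} \<Longrightarrow> (\<phi> has_real_derivative \<phi>' u) (at u)"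
    and cont: "continuous_on {a..b} \<phi>'"
  obtains K L where "\<And>u. u \<in> {a..b} \<Longrightarrow> \<bar>\<phi> u\<bar> \<le> K"
    "\<And>u v. u \<in> {a..b} \<Longrightarrow> v \<in> {a..b} \<Longrightarrow> \<bar>\<phi> u - \<phi> v\<bar> \<le> L * \<bar>u - v\<bar>"
proof -
  have c\<phi>: "continuous_on {a..b} \<phi>"
    using der by (meson DERIV_isCont continuous_at_imp_continuous_on)
  have "bounded (\<phi> ` {a..b})" by (rule compact_imp_bounded[OF compact_continuous_image[OF c\<phi>]]) simp
  then have "\<exists>K. \<forall>u\<in>{a..b}. \<bar>\<phi> u\<bar> \<le> K" by (simp add: bounded_real)
  then obtain K where K: "\<And>u. u \<in> {a..b} \<Longrightarrow> \<bar>\<phi> u\<bar> \<le> K" by blast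
  have "bounded (\<phi>' ` {a..b})" by (rule compact_imp_bounded[OF compact_continuous_image[OF cont]]) simp
  then have "\<exists>B. \<forall>u\<in>{a..b}. \<bar>\<phi>' u\<bar> \<le> B" by (simp add: bounded_real)
  then obtain B where B: "\<And>u. u \<in> {a..b} \<Longrightarrow> \<bar>\<phi>' u\<bar> \<le> B" by blast
  have lip: "\<bar>\<phi> u - \<phi> v\<bar> \<le> B * \<bar>u - v\<bar>" if u: "u \<in> {a..b}" and v: "v \<in> {a..b}" and uv: "u < v" for u v
  proof -
    have "\<exists>z. u < z \<and> z < v \<and> \<phi> v - \<phi> u = (v - u) * \<phi>' z"
      apply (rule MVT2[OF uv])
      using der u v by auto
    then obtain z where z: "u < z" "z < v" "\<phi> v - \<phi> u = (v - u) * \<phi>' z" by blast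
    have zab: "z \<in> {a..b}" using z u v by auto
    have "\<bar>\<phi> u - \<phi> v\<bar> = \<bar>v - u\<bar> * \<bar>\<phi>' z\<bar>" proof -
      have "\<bar>\<phi> u - \<phi> v\<bar> = \<bar>\<phi> v - \<phi> u\<bar>" by (rule abs_minus_commute)
      also have "\<dots> = \<bar>v - u\<bar> * \<bar>\<phi>' z\<bar>" by (simp only: z(3) abs_mult)
      finally show ?thesis .
    qed
    also have "\<dots> \<le> \<bar>v - u\<bar> * B" by (rule mult_left_mono[OF B[OF zab]]) simp
    finally show ?thesis by (simp add: abs_minus_commute mult.commute)
  qed
  have "\<bar>\<phi> u - \<phi> v\<bar> \<le> B * \<bar>u - v\<bar>" if "u \<in> {a..b}" "v \<in> {a..b}" for u v
  proof -
    consider "u < v" | "u = v" | "v < u" by linarith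
    then show ?thesis
    proof cases
      case 1 then show ?thesis using lip that by blast
    next
      case 2 then show ?thesis by simp
    next
      case 3 then show ?thesis using lip[of v u] that by (simp add: abs_minus_commute)
    qed
  qed
  then show ?thesis using that K by blast
qed

lemma LB_comp:
  fixes \<phi> \<phi>' :: "real \<Rightarrow> real"
  assumes g: "LB S g" and rng: "\<And>p. p \<in> S \<Longrightarrow> g p \<in> {a..b}" and ab: "a \<le> b"
    and der: "\<And>u. u \<in> {a..b} \<Longrightarrow> (\<phi> has_real_derivative \<phi>' u) (at u)"
    and cont: "continuous_on {a..b} \<phi>'"
  shows "LB S (\<lambda>p. \<phi> (g p))"
proof -
  obtain Kg Lg where gg: "Kg \<ge> 0" "Lg \<ge> 0" "\<And>p. p \<in> S \<Longrightarrow> \<bar>g p\<bar> \<le> Kg" "\<And>p q. p \<in> S \<Longrightarrow> q \<in> S \<Longrightarrow> \<bar>g p - g q\<bar> \<le> Lg * dd p q"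
    using LBE[OF g] by metis
  obtain K L where K: "\<And>u. u \<in> {a..b} \<Longrightarrow> \<bar>\<phi> u\<bar> \<le> K"
    and L: "\<And>u v. u \<in> {a..b} \<Longrightarrow> v \<in> {a..b} \<Longrightarrow> \<bar>\<phi> u - \<phi> v\<bar> \<le> L * \<bar>u - v\<bar>"
    using lip_scalar[OF ab der cont] by metis
  show ?thesis
  proof (rule LBI[of _ _ K "max L 0 * Lg"])
    fix p assume "p \<in> S" then show "\<bar>\<phi> (g p)\<bar> \<le> K" using K rng by blast
  next
    fix p q assume p: "p \<in> S" and q: "q \<in> S"
    have "\<bar>\<phi> (g p) - \<phi> (g q)\<bar> \<le> L * \<bar>g p - g q\<bar>" using L rng p q by blast
    also have "\<dots> \<le> max L 0 * \<bar>g p - g q\<bar>" by (rule mult_right_mono) auto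
    also have "\<dots> \<le> max L 0 * (Lg * dd p q)" by (rule mult_left_mono[OF gg(4)[OF p q]]) auto
    finally show "\<bar>\<phi> (g p) - \<phi> (g q)\<bar> \<le> max L 0 * Lg * dd p q" by (simp add: mult.assoc)
  qed
qed


lemma LB_exp: assumes g: "LB S g" shows "LB S (\<lambda>p. exp (g p))"
proof -
  obtain Kg Lg where gg: "Kg \<ge> 0" "\<And>p. p \<in> S \<Longrightarrow> \<bar>g p\<bar> \<le> Kg"
    using LBE[OF g] by metis
  show ?thesis
  proof (rule LB_comp[OF g, of "-Kg" Kg exp exp])
    fix p assume "p \<in> S" then show "g p \<in> {-Kg..Kg}" using gg(2)[of p] by auto
  qed (use gg in \<open>auto intro!: continuous_intros DERIV_exp\<close>)
qed

lemma LB_powr: assumes g: "LB S g" and c: "c > 0" and ge: "\<And>p. p \<in> S \<Longrightarrow> g p \<ge> c"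
  shows "LB S (\<lambda>p. g p powr r)"
proof -
  obtain Kg Lg where gg: "Kg \<ge> 0" "\<And>p. p \<in> S \<Longrightarrow> \<bar>g p\<bar> \<le> Kg"
    using LBE[OF g] by metis
  show ?thesis
  proof (rule LB_comp[OF g, of c "max c Kg" "\<lambda>u. u powr r" "\<lambda>u. r * u powr (r - 1)"])
    fix p assume "p \<in> S" then show "g p \<in> {c..max c Kg}" using gg(2)[of p] ge[of p] by auto
  next
    fix u assume "u \<in> {c..max c Kg}"
    then have "u > 0" using c by auto
    then show "((\<lambda>u. u powr r) has_real_derivative r * u powr (r - 1)) (at u)"
      by (rule has_real_derivative_powr)
  next
    show "continuous_on {c..max c Kg} (\<lambda>u. r * u powr (r - 1))"
      using c by (intro continuous_intros) auto
  qed simp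
qed

definition box3 :: "real \<Rightarrow> real \<Rightarrow> real \<Rightarrow> real \<Rightarrow> real \<Rightarrow> real \<Rightarrow> st set" where
  "box3 xl xu hl hu nl nup = {p. xl \<le> fst p \<and> fst p \<le> xu \<and> hl \<le> fst (snd p) \<and> fst (snd p) \<le> hu \<and>
      nl \<le> snd (snd p) \<and> snd (snd p) \<le> nup}"

lemma bnd3_box3: "bnd3 (box3 xl xu hl hu nl nup)"
  unfolding bnd3_def box3_def
  by (rule exI[of _ "\<bar>xl\<bar> + \<bar>xu\<bar> + \<bar>hl\<bar> + \<bar>hu\<bar> + \<bar>nl\<bar> + \<bar>nup\<bar>"]) auto

lemma f_LB:
  fixes xl xu hl hu nl nup :: real
  assumes P: "params_ok P" and hl: "hl > 0" and nl: "1 + eta P * nl > 0"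
  defines "S \<equiv> box3 xl xu hl hu nl nup"
  shows "LB S (\<lambda>p. fx P (fst p) (fst (snd p)) (snd (snd p)))"
    and "LB S (\<lambda>p. fh P (fst p) (fst (snd p)) (snd (snd p)))"
    and "LB S (\<lambda>p. fn P (fst p) (fst (snd p)) (snd (snd p)))"
proof -
  have X: "LB S (\<lambda>p. fst p)" unfolding S_def by (rule LB_x[OF bnd3_box3])
  have H: "LB S (\<lambda>p. fst (snd p))" unfolding S_def by (rule LB_h[OF bnd3_box3])
  have N: "LB S (\<lambda>p. snd (snd p))" unfolding S_def by (rule LB_n[OF bnd3_box3])
  have hS: "\<And>p. p \<in> S \<Longrightarrow> fst (snd p) \<ge> hl" unfolding S_def box3_def by auto
  have nS: "\<And>p. p \<in> S \<Longrightarrow> snd (snd p) \<ge> nl" unfolding S_def box3_def by auto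
  have pos: "s0 P > 0" "lam P > 0" "hc P > 0" "cc P > 0" "phi P > 0"
     "dmax P > 0" "h50 P > 0" "mm P > 0" "mu0 P > 0" "pp P > 0" "nu P > 0"
     "alpha P > 0" "beta P > 0" "Kg P > 0" "gamma0 P > 0" "eta P > 0" "rr P > 0"
    using P by (auto simp: params_ok_def)
  have pw: "LB S (\<lambda>p. fst (snd p) powr r)" for r
    by (rule LB_powr[OF H hl hS])
  have dSL: "LB S (\<lambda>p. dS P (fst (snd p)))"
    unfolding dS_def
  proof (rule LB_divide[OF LB_mult[OF LB_const pw] LB_add[OF LB_const pw]])
    show "h50 P powr mm P > 0" using pos by simp
    fix p show "h50 P powr mm P \<le> h50 P powr mm P + fst (snd p) powr mm P" by simp
  qed
  have ex: "LB S (\<lambda>p. exp (- lam P * (fst (snd p) - hc P)))"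
    by (rule LB_exp[OF LB_mult[OF LB_const LB_diff[OF H LB_const]]])
  have SfL: "LB S (\<lambda>p. Sf P (fst (snd p)))"
    unfolding Sf_def
  proof (rule LB_add[OF LB_diff[OF LB_divide[OF LB_const LB_add[OF LB_const ex]] LB_const] LB_mult[OF LB_const dSL]])
    show "(0::real) < 1" by simp
    fix p show "1 \<le> 1 + exp (- lam P * (fst (snd p) - hc P))" by simp
  qed
  have muL: "LB S (\<lambda>p. muf P (fst (snd p)))"
    unfolding muf_def by (rule LB_mult[OF LB_const pw])
  have GL: "LB S (\<lambda>p. Gf P (fst (snd p)))"
    unfolding Gf_def
  proof (rule LB_divide[OF LB_const LB_add[OF LB_const H], of "Kg P + hl"])
    show "Kg P + hl > 0" using pos hl by simp
    fix p assume "p \<in> S" then show "Kg P + hl \<le> Kg P + fst (snd p)" using hS by simp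
  qed
  have GaL: "LB S (\<lambda>p. Gammaf P (snd (snd p)))"
    unfolding Gammaf_def
  proof (rule LB_divide[OF LB_const LB_add[OF LB_const LB_mult[OF LB_const N]], of "1 + eta P * nl"])
    show "1 + eta P * nl > 0" by (rule nl)
    fix p assume "p \<in> S"
    then have "eta P * nl \<le> eta P * snd (snd p)" using nS pos by (intro mult_left_mono) auto
    then show "1 + eta P * nl \<le> 1 + eta P * snd (snd p)" by simp
  qed
  have DL: "LB S (\<lambda>p. Df P (fst (snd p)) (fst p))"
    unfolding Df_def by (rule LB_mult[OF LB_diff[OF LB_const LB_mult[OF LB_const X]] dSL])
  show "LB S (\<lambda>p. fx P (fst p) (fst (snd p)) (snd (snd p)))"
    unfolding fx_def
    by (rule LB_diff[OF LB_add[OF LB_mult[OF LB_mult[OF X LB_diff[OF LB_const X]] SfL] LB_mult[OF muL LB_diff[OF LB_const X]]] LB_mult[OF LB_const X]])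
  show "LB S (\<lambda>p. fh P (fst p) (fst (snd p)) (snd (snd p)))"
    unfolding fh_def
    by (rule LB_diff[OF LB_mult[OF LB_mult[OF LB_mult[OF LB_const N] LB_add[OF LB_const LB_mult[OF LB_const X]]] GL] LB_mult[OF GaL LB_diff[OF H LB_const]]])
  show "LB S (\<lambda>p. fn P (fst p) (fst (snd p)) (snd (snd p)))"
    unfolding fn_def
    by (rule LB_diff[OF LB_mult[OF LB_mult[OF LB_const N] LB_diff[OF LB_const N]] LB_mult[OF DL N]])
qed

lemma der_int:
  assumes "(u has_real_derivative d) (at s within {0..})" "s > 0"
  shows "(u has_real_derivative d) (at s)"
proof -
  have "at s within {0..} = at s" by (rule at_within_interior) (use assms(2) in simp)
  then show ?thesis using assms(1) by simp
qed

lemma cont_of_der: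
  assumes "\<And>t. t \<ge> 0 \<Longrightarrow> (u has_real_derivative u' t) (at t within {0..})"
  shows "continuous_on {0..} u"
  by (rule DERIV_continuous_on) (use assms in auto)

lemma mvt_interior:
  fixes u u' :: "real \<Rightarrow> real"
  assumes ab: "a < b" and c: "continuous_on {a..b} u"
    and d: "\<And>s. a < s \<Longrightarrow> s < b \<Longrightarrow> (u has_real_derivative u' s) (at s)"
  shows "\<exists>z. a < z \<and> z < b \<and> u b - u a = (b - a) * u' z"
proof -
  obtain l z where z: "a < z" "z < b" "DERIV u z :> l" "u b - u a = (b - a) * l"
    using MVT[OF ab c] d real_differentiable_def by blast
  have "l = u' z" using DERIV_unique[OF z(3) d[OF z(1,2)]] .
  then show ?thesis using z by blast
qed

lemma stay_le:
  fixes u u' :: "real \<Rightarrow> real"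
  assumes der: "\<And>t. t \<ge> 0 \<Longrightarrow> (u has_real_derivative u' t) (at t within {0..})"
    and u0: "u 0 \<le> c" and neg: "\<And>t. t \<ge> 0 \<Longrightarrow> u t > c \<Longrightarrow> u' t \<le> 0"
    and tge: "t \<ge> 0"
  shows "u t \<le> c"
proof (rule ccontr)
  assume "\<not> u t \<le> c"
  then have ut: "u t > c" by simp
  have t0: "t > 0" using ut u0 tge by (cases "t = 0") auto
  have cu: "continuous_on {0..} u" by (rule cont_of_der[OF der])
  define Z where "Z = {s \<in> {0..t}. u s \<le> c}"
  have cZ: "closed Z" unfolding Z_def
    by (rule continuous_on_closed_Collect_le) (auto intro: continuous_on_subset[OF cu] continuous_intros)
  have Zne: "Z \<noteq> {}" using u0 t0 by (auto simp: Z_def intro!: exI[of _ 0])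
  have Zb: "bdd_above Z" unfolding Z_def by (rule bdd_aboveI[of _ t]) auto
  define t1 where "t1 = Sup Z"
  have t1Z: "t1 \<in> Z" unfolding t1_def by (rule closed_contains_Sup[OF Zne Zb cZ])
  then have t1: "0 \<le> t1" "t1 \<le> t" "u t1 \<le> c" by (auto simp: Z_def)
  then have t1t: "t1 < t" using ut by (cases "t1 = t") auto
  have above: "u s > c" if "t1 < s" "s \<le> t" for s
  proof (rule ccontr)
    assume "\<not> u s > c"
    then have "s \<in> Z" using that t1 by (auto simp: Z_def)
    then have "s \<le> t1" unfolding t1_def by (rule cSup_upper[OF _ Zb])
    then show False using that by simp
  qed
  have "\<exists>z. t1 < z \<and> z < t \<and> u t - u t1 = (t - t1) * u' z"
  proof (rule mvt_interior[OF t1t])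
    show "continuous_on {t1..t} u" by (rule continuous_on_subset[OF cu]) (use t1 in auto)
    fix s assume "t1 < s" "s < t"
    then show "(u has_real_derivative u' s) (at s)" using t1 by (intro der_int der) auto
  qed
  then obtain z where z: "t1 < z" "z < t" "u t - u t1 = (t - t1) * u' z" by blast
  have "u' z \<le> 0" using neg[of z] above[of z] z t1 by auto
  then have "(t - t1) * u' z \<le> 0" using t1t by (simp add: mult_nonneg_nonpos)
  then show False using z(3) t1(3) ut by linarith
qed

lemma stay_ge:
  fixes u u' :: "real \<Rightarrow> real"
  assumes der: "\<And>t. t \<ge> 0 \<Longrightarrow> (u has_real_derivative u' t) (at t within {0..})"
    and u0: "u 0 \<ge> c" and pos: "\<And>t. t \<ge> 0 \<Longrightarrow> u t < c \<Longrightarrow> u' t \<ge> 0"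
    and tge: "t \<ge> 0"
  shows "u t \<ge> c"
proof -
  have "- u t \<le> - c"
  proof (rule stay_le[where u="\<lambda>t. - u t" and u'="\<lambda>t. - u' t", OF _ _ _ tge])
    fix t :: real assume "t \<ge> 0"
    then show "((\<lambda>t. - u t) has_real_derivative - u' t) (at t within {0..})"
      by (intro derivative_intros der)
  qed (use u0 pos in auto)
  then show ?thesis by simp
qed

lemma mvt_bound:
  fixes w w' :: "real \<Rightarrow> real"
  assumes ab: "a \<le> b" and c: "continuous_on {a..b} w"
    and d: "\<And>s. a < s \<Longrightarrow> s < b \<Longrightarrow> (w has_real_derivative w' s) (at s)"
    and bd: "\<And>s. a < s \<Longrightarrow> s < b \<Longrightarrow> \<bar>w' s\<bar> \<le> Bd"
  shows "\<bar>w b - w a\<bar> \<le> Bd * (b - a)"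
proof (cases "a = b")
  case True then show ?thesis by simp
next
  case False
  then have ab': "a < b" using ab by simp
  obtain z where z: "a < z" "z < b" "w b - w a = (b - a) * w' z"
    using mvt_interior[OF ab' c d] by blast
  have "\<bar>w b - w a\<bar> = (b - a) * \<bar>w' z\<bar>" using z(3) ab' by (simp add: abs_mult)
  also have "\<dots> \<le> (b - a) * Bd" by (rule mult_left_mono[OF bd[OF z(1,2)]]) (use ab' in simp)
  finally show ?thesis by (simp add: mult.commute)
qed

definition clampr :: "real \<Rightarrow> real \<Rightarrow> real \<Rightarrow> real" where
  "clampr a b v = max a (min b v)"

lemma clampr_lip: "a \<le> b \<Longrightarrow> \<bar>clampr a b u - clampr a b v\<bar> \<le> \<bar>u - v\<bar>"
  unfolding clampr_def by (auto simp: max_def min_def)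

lemma clampr_in: "a \<le> b \<Longrightarrow> a \<le> clampr a b v \<and> clampr a b v \<le> b"
  unfolding clampr_def by auto

lemma clampr_id: "a \<le> v \<Longrightarrow> v \<le> b \<Longrightarrow> clampr a b v = v"
  unfolding clampr_def by auto

lemma clampr_hi: "a \<le> b \<Longrightarrow> v > b \<Longrightarrow> clampr a b v = b"
  unfolding clampr_def by auto

lemma clampr_lo: "a \<le> b \<Longrightarrow> v < a \<Longrightarrow> clampr a b v = a"
  unfolding clampr_def by auto

definition cl3 :: "real \<Rightarrow> real \<Rightarrow> st \<Rightarrow> st" where
  "cl3 a b p = (clampr 0 1 (fst p), clampr a b (fst (snd p)), clampr 0 1 (snd (snd p)))"

definition fv :: "params \<Rightarrow> st \<Rightarrow> st" where
  "fv P p = (fx P (fst p) (fst (snd p)) (snd (snd p)), fh P (fst p) (fst (snd p)) (snd (snd p)),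
             fn P (fst p) (fst (snd p)) (snd (snd p)))"

lemma norm_st_le: "norm (v::st) \<le> \<bar>fst v\<bar> + \<bar>fst (snd v)\<bar> + \<bar>snd (snd v)\<bar>"
proof -
  obtain a b c where v: "v = (a, b, c)" by (cases v) auto
  have "norm (a, b, c) \<le> norm a + norm (b, c)" by (rule norm_Pair_le)
  also have "norm (b, c) \<le> norm b + norm c" by (rule norm_Pair_le)
  finally show ?thesis using v by simp
qed

lemma dd_le_norm: "dd p q \<le> 3 * norm (p - q)"
proof -
  obtain a b c where p: "p = (a, b, c)" by (cases p) auto
  obtain a' b' c' where q: "q = (a', b', c')" by (cases q) auto
  have e: "p - q = (a - a', b - b', c - c')" using p q by simp
  have 1: "\<bar>a - a'\<bar> \<le> norm (p - q)" unfolding e using norm_fst_le[of "a - a'" "(b - b', c - c')"] by simp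
  have 2: "norm (b - b', c - c') \<le> norm (p - q)" unfolding e by (rule norm_snd_le)
  have 3: "\<bar>b - b'\<bar> \<le> norm (p - q)" using 2 norm_fst_le[of "b - b'" "c - c'"] by simp
  have 4: "\<bar>c - c'\<bar> \<le> norm (p - q)" using 2 norm_snd_le[of "c - c'" "b - b'"] by simp
  show ?thesis using 1 3 4 p q by (simp add: dd_def)
qed

lemma vd3:
  assumes "(\<phi> has_vector_derivative v) F"
  shows "((\<lambda>t. fst (\<phi> t)) has_real_derivative fst v) F"
    and "((\<lambda>t. fst (snd (\<phi> t))) has_real_derivative fst (snd v)) F"
    and "((\<lambda>t. snd (snd (\<phi> t))) has_real_derivative snd (snd v)) F"
proof -
  have 1: "((\<lambda>t. fst (\<phi> t)) has_vector_derivative fst v) F"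
    by (rule bounded_linear.has_vector_derivative[OF bounded_linear_fst assms])
  have 2: "((\<lambda>t. snd (\<phi> t)) has_vector_derivative snd v) F"
    by (rule bounded_linear.has_vector_derivative[OF bounded_linear_snd assms])
  have 3: "((\<lambda>t. fst (snd (\<phi> t))) has_vector_derivative fst (snd v)) F"
    by (rule bounded_linear.has_vector_derivative[OF bounded_linear_fst 2])
  have 4: "((\<lambda>t. snd (snd (\<phi> t))) has_vector_derivative snd (snd v)) F"
    by (rule bounded_linear.has_vector_derivative[OF bounded_linear_snd 2])
  show "((\<lambda>t. fst (\<phi> t)) has_real_derivative fst v) F"
    "((\<lambda>t. fst (snd (\<phi> t))) has_real_derivative fst (snd v)) F"
    "((\<lambda>t. snd (snd (\<phi> t))) has_real_derivative snd (snd v)) F"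
    using 1 3 4 by (simp_all add: has_real_derivative_iff_has_vector_derivative)
qed

lemma pos_params:
  assumes "params_ok P"
  shows "s0 P > 0" "lam P > 0" "hc P > 0" "cc P > 0" "phi P > 0"
     "dmax P > 0" "h50 P > 0" "mm P > 0" "mu0 P > 0" "pp P > 0" "nu P > 0"
     "alpha P > 0" "beta P > 0" "Kg P > 0" "gamma0 P > 0" "eta P > 0" "rr P > 0" "phi P \<le> 1"
  using assms by (auto simp: params_ok_def)

lemma fx_hi: "params_ok P \<Longrightarrow> fx P 1 h n \<le> 0"
  using pos_params[of P] by (simp add: fx_def)

lemma fx_lo: "params_ok P \<Longrightarrow> fx P 0 h n \<ge> 0"
  using pos_params[of P] by (simp add: fx_def muf_def)

lemma fn_lo: "fn P x h 0 = 0"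
  by (simp add: fn_def)

lemma dS_nonneg: "params_ok P \<Longrightarrow> dS P h \<ge> 0"
  using pos_params[of P] unfolding dS_def
  by (intro divide_nonneg_nonneg mult_nonneg_nonneg) auto

lemma fn_hi: assumes P: "params_ok P" and x: "0 \<le> x" "x \<le> 1" shows "fn P x h 1 \<le> 0"
proof -
  have "phi P * x \<le> 1 * 1" using pos_params[OF P] x by (intro mult_mono) auto
  then have "0 \<le> (1 - phi P * x) * dS P h" using dS_nonneg[OF P] by simp
  then show ?thesis by (simp add: fn_def Df_def)
qed

lemma fh_lo:
  assumes P: "params_ok P" and x: "0 \<le> x" and n: "0 \<le> n" and H: "0 < H" "H \<le> 1"
  shows "fh P x H n \<ge> 0"
proof -
  note p = pos_params[OF P]
  have "0 \<le> alpha P * n * (1 + beta P * x) * Gf P H"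
    using p x n H unfolding Gf_def by (intro mult_nonneg_nonneg divide_nonneg_nonneg) auto
  moreover have "Gammaf P n \<ge> 0" using p n unfolding Gammaf_def by (intro divide_nonneg_nonneg) auto
  then have "Gammaf P n * (H - 1) \<le> 0" using H by (simp add: mult_nonneg_nonpos)
  ultimately show ?thesis by (simp add: fh_def)
qed

lemma fh_hi:
  assumes P: "params_ok P" and x: "0 \<le> x" "x \<le> 1" and n: "0 \<le> n" "n \<le> 1"
    and H: "H \<ge> 1 + alpha P * (1 + beta P) * (1 + eta P) / gamma0 P"
  shows "fh P x H n \<le> 0"
proof -
  note p = pos_params[OF P]
  define A where "A = alpha P * (1 + beta P)"
  have A0: "A \<ge> 0" using p by (simp add: A_def)
  have Hpos: "H > 0" using H p A0 by (smt (verit, best) divide_nonneg_pos mult_nonneg_nonneg)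
  have G: "0 \<le> Gf P H" "Gf P H \<le> 1" using p Hpos by (auto simp: Gf_def)
  have "alpha P * n \<le> alpha P * 1" using p n by (intro mult_left_mono) auto
  moreover have "1 + beta P * x \<le> 1 + beta P * 1" using p x by (intro add_left_mono mult_left_mono) auto
  ultimately have "alpha P * n * (1 + beta P * x) \<le> alpha P * 1 * (1 + beta P * 1)"
    using p x n by (intro mult_mono) auto
  then have a1: "alpha P * n * (1 + beta P * x) \<le> A" by (simp add: A_def)
  have "alpha P * n * (1 + beta P * x) * Gf P H \<le> A * 1"
    using a1 G A0 p x n by (intro mult_mono) auto
  then have t1: "alpha P * n * (1 + beta P * x) * Gf P H \<le> A" by simp
  have en: "0 \<le> eta P * n" using p n by simp
  have en1: "eta P * n \<le> eta P" using p n by (simp add: mult_left_le)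
  have g1: "gamma0 P / (1 + eta P) \<le> Gammaf P n"
    unfolding Gammaf_def
    by (rule divide_left_mono) (use p en en1 in \<open>auto intro!: mult_pos_pos\<close>)
  have "0 < gamma0 P / (1 + eta P)" using p by simp
  then have g0: "0 \<le> Gammaf P n" using g1 by linarith
  have h1: "A * (1 + eta P) / gamma0 P \<le> H - 1" using H by (simp add: A_def)
  have "gamma0 P / (1 + eta P) * (A * (1 + eta P) / gamma0 P) \<le> Gammaf P n * (H - 1)"
    using g1 h1 p A0 g0 by (intro mult_mono) auto
  moreover have "gamma0 P / (1 + eta P) * (A * (1 + eta P) / gamma0 P) = A"
  proof -
    have ne: "1 + eta P \<noteq> 0" "gamma0 P \<noteq> 0" using p by auto
    show ?thesis using ne by simp
  qed
  ultimately have "A \<le> Gammaf P n * (H - 1)" by simp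
  then show ?thesis using t1 by (simp add: fh_def)
qed


lemma existence:
  assumes P: "params_ok P"
    and x0: "0 \<le> x0" "x0 \<le> 1" and h0: "h0 > 0" and n0: "0 \<le> n0" "n0 \<le> 1"
  defines "hmin \<equiv> min h0 1"
    and "hmax \<equiv> max h0 (1 + alpha P * (1 + beta P) * (1 + eta P) / gamma0 P)"
  shows "\<exists>x h n. is_solution P x h n \<and> x 0 = x0 \<and> h 0 = h0 \<and> n 0 = n0 \<and>
           (\<forall>t\<ge>0. 0 \<le> x t \<and> x t \<le> 1 \<and> hmin \<le> h t \<and> h t \<le> hmax \<and> 0 \<le> n t \<and> n t \<le> 1)"
proof -
  note p = pos_params[OF P]
  have hmin0: "hmin > 0" using h0 by (simp add: hmin_def)
  have hmin1: "hmin \<le> 1" by (simp add: hmin_def)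
  have hminmax: "hmin \<le> hmax" by (simp add: hmin_def hmax_def)
  have hmaxb: "hmax \<ge> 1 + alpha P * (1 + beta P) * (1 + eta P) / gamma0 P" by (simp add: hmax_def)
  define B where "B = box3 0 1 hmin hmax 0 1"
  have nl: "1 + eta P * 0 > 0" by simp
  note LBs = f_LB[OF P hmin0 nl, of 0 1 hmax 1, folded B_def]
  obtain Kx Lx where X: "Kx \<ge> 0" "Lx \<ge> 0"
    "\<And>p. p \<in> B \<Longrightarrow> \<bar>fx P (fst p) (fst (snd p)) (snd (snd p))\<bar> \<le> Kx"
    "\<And>p q. p \<in> B \<Longrightarrow> q \<in> B \<Longrightarrow> \<bar>fx P (fst p) (fst (snd p)) (snd (snd p)) - fx P (fst q) (fst (snd q)) (snd (snd q))\<bar> \<le> Lx * dd p q"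
    using LBE[OF LBs(1)] by metis
  obtain Kh Lh where Hh: "Kh \<ge> 0" "Lh \<ge> 0"
    "\<And>p. p \<in> B \<Longrightarrow> \<bar>fh P (fst p) (fst (snd p)) (snd (snd p))\<bar> \<le> Kh"
    "\<And>p q. p \<in> B \<Longrightarrow> q \<in> B \<Longrightarrow> \<bar>fh P (fst p) (fst (snd p)) (snd (snd p)) - fh P (fst q) (fst (snd q)) (snd (snd q))\<bar> \<le> Lh * dd p q"
    using LBE[OF LBs(2)] by metis
  obtain Kn Ln where N: "Kn \<ge> 0" "Ln \<ge> 0"
    "\<And>p. p \<in> B \<Longrightarrow> \<bar>fn P (fst p) (fst (snd p)) (snd (snd p))\<bar> \<le> Kn"
    "\<And>p q. p \<in> B \<Longrightarrow> q \<in> B \<Longrightarrow> \<bar>fn P (fst p) (fst (snd p)) (snd (snd p)) - fn P (fst q) (fst (snd q)) (snd (snd q))\<bar> \<le> Ln * dd p q"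
    using LBE[OF LBs(3)] by metis
  define F where "F p = fv P (cl3 hmin hmax p)" for p
  have clB: "cl3 hmin hmax p \<in> B" for p
    using clampr_in[of 0 1] clampr_in[OF hminmax] by (simp add: B_def box3_def cl3_def)
  have cldd: "dd (cl3 hmin hmax p) (cl3 hmin hmax q) \<le> dd p q" for p q
    using clampr_lip[of 0 1 "fst p" "fst q"] clampr_lip[OF hminmax, of "fst (snd p)" "fst (snd q)"]
      clampr_lip[of 0 1 "snd (snd p)" "snd (snd q)"]
    by (simp add: dd_def cl3_def)
  define L where "L = 3 * (Lx + Lh + Ln) + 1"
  have L0: "L > 0" using X Hh N by (simp add: L_def)
  have lip: "norm (F y - F z) \<le> L * norm (y - z)" for y z
  proof -
    let ?y = "cl3 hmin hmax y" and ?z = "cl3 hmin hmax z"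
    have "norm (F y - F z) \<le> \<bar>fst (F y - F z)\<bar> + \<bar>fst (snd (F y - F z))\<bar> + \<bar>snd (snd (F y - F z))\<bar>"
      by (rule norm_st_le)
    also have "\<dots> \<le> Lx * dd ?y ?z + Lh * dd ?y ?z + Ln * dd ?y ?z"
      using X(4)[OF clB clB, of y z] Hh(4)[OF clB clB, of y z] N(4)[OF clB clB, of y z]
      by (simp add: F_def fv_def)
    also have "\<dots> = (Lx + Lh + Ln) * dd ?y ?z" by (simp add: algebra_simps)
    also have "\<dots> \<le> (Lx + Lh + Ln) * dd y z" by (rule mult_left_mono[OF cldd]) (use X Hh N in simp)
    also have "\<dots> \<le> (Lx + Lh + Ln) * (3 * norm (y - z))" by (rule mult_left_mono[OF dd_le_norm]) (use X Hh N in simp)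
    also have "\<dots> \<le> L * norm (y - z)" by (simp add: L_def algebra_simps)
    finally show ?thesis .
  qed
  have bnd: "norm (F y) \<le> Kx + Kh + Kn" for y
  proof -
    have "norm (F y) \<le> \<bar>fst (F y)\<bar> + \<bar>fst (snd (F y))\<bar> + \<bar>snd (snd (F y))\<bar>" by (rule norm_st_le)
    also have "\<dots> \<le> Kx + Kh + Kn"
      using X(3)[OF clB, of y] Hh(3)[OF clB, of y] N(3)[OF clB, of y] by (simp add: F_def fv_def)
    finally show ?thesis .
  qed
  obtain \<phi> where \<phi>0: "\<phi> 0 = (x0, h0, n0)"
    and d\<phi>: "\<forall>t\<ge>0. (\<phi> has_vector_derivative F (\<phi> t)) (at t within {0..})"
    using global_existence[OF lip L0 bnd, of "(x0, h0, n0)"] by blast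
  define x where "x t = fst (\<phi> t)" for t
  define h where "h t = fst (snd (\<phi> t))" for t
  define n where "n t = snd (snd (\<phi> t))" for t
  define cx where "cx t = clampr 0 1 (x t)" for t
  define ch where "ch t = clampr hmin hmax (h t)" for t
  define cn where "cn t = clampr 0 1 (n t)" for t
  have Fphi: "F (\<phi> t) = (fx P (cx t) (ch t) (cn t), fh P (cx t) (ch t) (cn t), fn P (cx t) (ch t) (cn t))" for t
    by (simp add: F_def fv_def cl3_def cx_def ch_def cn_def x_def h_def n_def)
  have dx: "(x has_real_derivative fx P (cx t) (ch t) (cn t)) (at t within {0..})" if "t \<ge> 0" for t
    using vd3(1)[OF d\<phi>[rule_format, OF that]] unfolding Fphi by (simp add: x_def[abs_def])
  have dh: "(h has_real_derivative fh P (cx t) (ch t) (cn t)) (at t within {0..})" if "t \<ge> 0" for t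
    using vd3(2)[OF d\<phi>[rule_format, OF that]] unfolding Fphi by (simp add: h_def[abs_def])
  have dn: "(n has_real_derivative fn P (cx t) (ch t) (cn t)) (at t within {0..})" if "t \<ge> 0" for t
    using vd3(3)[OF d\<phi>[rule_format, OF that]] unfolding Fphi by (simp add: n_def[abs_def])
  have cxr: "0 \<le> cx t \<and> cx t \<le> 1" for t using clampr_in[of 0 1] by (simp add: cx_def)
  have chr: "hmin \<le> ch t \<and> ch t \<le> hmax" for t using clampr_in[OF hminmax] by (simp add: ch_def)
  have cnr: "0 \<le> cn t \<and> cn t \<le> 1" for t using clampr_in[of 0 1] by (simp add: cn_def)
  have init: "x 0 = x0" "h 0 = h0" "n 0 = n0" using \<phi>0 by (simp_all add: x_def h_def n_def)
  have xle: "x t \<le> 1" if "t \<ge> 0" for t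
  proof (rule stay_le[OF dx _ _ that])
    show "x 0 \<le> 1" using init x0 by simp
    fix t assume "x t > 1" then show "fx P (cx t) (ch t) (cn t) \<le> 0"
      using fx_hi[OF P] clampr_hi[of 0 1 "x t"] by (simp add: cx_def)
  qed
  have xge: "x t \<ge> 0" if "t \<ge> 0" for t
  proof (rule stay_ge[OF dx _ _ that])
    show "x 0 \<ge> 0" using init x0 by simp
    fix t assume "x t < 0" then show "fx P (cx t) (ch t) (cn t) \<ge> 0"
      using fx_lo[OF P] clampr_lo[of 0 1 "x t"] by (simp add: cx_def)
  qed
  have nle: "n t \<le> 1" if "t \<ge> 0" for t
  proof (rule stay_le[OF dn _ _ that])
    show "n 0 \<le> 1" using init n0 by simp
    fix t assume "n t > 1" then show "fn P (cx t) (ch t) (cn t) \<le> 0"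
      using fn_hi[OF P] cxr[of t] clampr_hi[of 0 1 "n t"] by (simp add: cn_def)
  qed
  have nge: "n t \<ge> 0" if "t \<ge> 0" for t
  proof (rule stay_ge[OF dn _ _ that])
    show "n 0 \<ge> 0" using init n0 by simp
    fix t assume "n t < 0" then show "fn P (cx t) (ch t) (cn t) \<ge> 0"
      using fn_lo clampr_lo[of 0 1 "n t"] by (simp add: cn_def)
  qed
  have hle: "h t \<le> hmax" if "t \<ge> 0" for t
  proof (rule stay_le[OF dh _ _ that])
    show "h 0 \<le> hmax" using init by (simp add: hmax_def)
    fix t assume "h t > hmax" then show "fh P (cx t) (ch t) (cn t) \<le> 0"
      using fh_hi[OF P _ _ _ _ hmaxb] cxr[of t] cnr[of t] clampr_hi[OF hminmax, of "h t"] by (simp add: ch_def)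
  qed
  have hge: "h t \<ge> hmin" if "t \<ge> 0" for t
  proof (rule stay_ge[OF dh _ _ that])
    show "h 0 \<ge> hmin" using init by (simp add: hmin_def)
    fix t assume "h t < hmin" then show "fh P (cx t) (ch t) (cn t) \<ge> 0"
      using fh_lo[OF P _ _ hmin0 hmin1] cxr[of t] cnr[of t] clampr_lo[OF hminmax, of "h t"] by (simp add: ch_def)
  qed
  have ids: "cx t = x t" "ch t = h t" "cn t = n t" if "t \<ge> 0" for t
    using that xle xge hle hge nle nge by (simp_all add: cx_def ch_def cn_def clampr_id)
  have "is_solution P x h n"
    unfolding is_solution_def using dx dh dn ids by simp
  then show ?thesis using init xle xge hle hge nle nge by blast
qed


lemma comp_bound:
  fixes u v ud vd :: "real \<Rightarrow> real"
  assumes ts: "0 \<le> ts" "ts \<le> tau"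
    and du: "\<And>s. s \<ge> 0 \<Longrightarrow> (u has_real_derivative ud s) (at s within {0..})"
    and dv: "\<And>s. s \<ge> 0 \<Longrightarrow> (v has_real_derivative vd s) (at s within {0..})"
    and bd: "\<And>s. ts < s \<Longrightarrow> s < tau \<Longrightarrow> \<bar>ud s - vd s\<bar> \<le> Bd"
    and eq: "u ts = v ts"
  shows "\<bar>u tau - v tau\<bar> \<le> Bd * (tau - ts)"
proof -
  have cu: "continuous_on {0..} u" by (rule cont_of_der[OF du])
  have cv: "continuous_on {0..} v" by (rule cont_of_der[OF dv])
  have "\<bar>(u tau - v tau) - (u ts - v ts)\<bar> \<le> Bd * (tau - ts)"
  proof (rule mvt_bound[where w="\<lambda>s. u s - v s" and w'="\<lambda>s. ud s - vd s", OF ts(2)])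
    show "continuous_on {ts..tau} (\<lambda>s. u s - v s)"
      by (intro continuous_intros continuous_on_subset[OF cu] continuous_on_subset[OF cv]) (use ts in auto)
    fix s assume s: "ts < s" "s < tau"
    then show "((\<lambda>s. u s - v s) has_real_derivative ud s - vd s) (at s)"
      using ts by (intro derivative_intros der_int du dv) auto
    show "\<bar>ud s - vd s\<bar> \<le> Bd" using bd s .
  qed
  then show ?thesis using eq by simp
qed

lemma uniqueness:
  assumes P: "params_ok P"
    and sol: "is_solution P x h n"
    and inB: "\<And>t. t \<ge> 0 \<Longrightarrow> 0 \<le> x t \<and> x t \<le> 1 \<and> hmin \<le> h t \<and> h t \<le> hmax \<and> 0 \<le> n t \<and> n t \<le> 1"
    and hmin0: "hmin > 0"
    and sol': "is_solution P x' h' n'"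
    and init: "x' 0 = x 0" "h' 0 = h 0" "n' 0 = n 0"
  shows "\<forall>t\<ge>0. x' t = x t \<and> h' t = h t \<and> n' t = n t"
proof (rule ccontr)
  note p = pos_params[OF P]
  assume "\<not> (\<forall>t\<ge>0. x' t = x t \<and> h' t = h t \<and> n' t = n t)"
  then obtain t1 where t1: "t1 \<ge> 0" "\<not> (x' t1 = x t1 \<and> h' t1 = h t1 \<and> n' t1 = n t1)" by blast
  define Y where "Y t = (x t, h t, n t)" for t
  define Y' where "Y' t = (x' t, h' t, n' t)" for t
  define e where "e t = \<bar>x t - x' t\<bar> + \<bar>h t - h' t\<bar> + \<bar>n t - n' t\<bar>" for t
  have eY: "e t = dd (Y t) (Y' t)" for t by (simp add: e_def dd_def Y_def Y'_def)
  have e0: "e t \<ge> 0" for t by (simp add: e_def)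
  have e_eq: "e t = 0 \<longleftrightarrow> (x' t = x t \<and> h' t = h t \<and> n' t = n t)" for t
    unfolding e_def by auto
  define fX where "fX t = fx P (x t) (h t) (n t)" for t
  define fH where "fH t = fh P (x t) (h t) (n t)" for t
  define fN where "fN t = fn P (x t) (h t) (n t)" for t
  define fX' where "fX' t = fx P (x' t) (h' t) (n' t)" for t
  define fH' where "fH' t = fh P (x' t) (h' t) (n' t)" for t
  define fN' where "fN' t = fn P (x' t) (h' t) (n' t)" for t
  have dx: "\<And>s. s \<ge> 0 \<Longrightarrow> (x has_real_derivative fX s) (at s within {0..})"
   and dh: "\<And>s. s \<ge> 0 \<Longrightarrow> (h has_real_derivative fH s) (at s within {0..})"
   and dn: "\<And>s. s \<ge> 0 \<Longrightarrow> (n has_real_derivative fN s) (at s within {0..})"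
    using sol unfolding is_solution_def fX_def fH_def fN_def by auto
  have dx': "\<And>s. s \<ge> 0 \<Longrightarrow> (x' has_real_derivative fX' s) (at s within {0..})"
   and dh': "\<And>s. s \<ge> 0 \<Longrightarrow> (h' has_real_derivative fH' s) (at s within {0..})"
   and dn': "\<And>s. s \<ge> 0 \<Longrightarrow> (n' has_real_derivative fN' s) (at s within {0..})"
    using sol' unfolding is_solution_def fX'_def fH'_def fN'_def by auto
  have ce: "continuous_on {0..} e"
    unfolding e_def
    by (intro continuous_intros cont_of_der[OF dx] cont_of_der[OF dh] cont_of_der[OF dn]
        cont_of_der[OF dx'] cont_of_der[OF dh'] cont_of_der[OF dn'])
  define A where "A = {t. t \<ge> 0 \<and> e t \<noteq> 0}"
  have Ane: "A \<noteq> {}" using t1 e_eq by (auto simp: A_def)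
  have Abd: "bdd_below A" by (rule bdd_belowI[of _ 0]) (auto simp: A_def)
  define ts where "ts = Inf A"
  have ts0: "ts \<ge> 0" unfolding ts_def by (rule cInf_greatest[OF Ane]) (auto simp: A_def)
  have before: "e s = 0" if "0 \<le> s" "s < ts" for s
  proof (rule ccontr)
    assume "e s \<noteq> 0"
    then have "s \<in> A" using that by (simp add: A_def)
    then have "ts \<le> s" unfolding ts_def by (rule cInf_lower[OF _ Abd])
    then show False using that by simp
  qed
  have ets: "e ts = 0"
  proof (cases "ts = 0")
    case True then show ?thesis using init e_eq by auto
  next
    case False
    then have tsp: "ts > 0" using ts0 by simp
    define Z where "Z = {s \<in> {0..ts}. e s \<le> 0}"
    have "closed Z" unfolding Z_def
      by (rule continuous_on_closed_Collect_le) (auto intro: continuous_on_subset[OF ce] continuous_intros)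
    moreover have "{0..<ts} \<subseteq> Z" using before by (auto simp: Z_def)
    ultimately have "closure {0..<ts} \<subseteq> Z" by (rule closure_minimal[rotated])
    then have "ts \<in> Z" using tsp by auto
    then show ?thesis using e0[of ts] by (simp add: Z_def)
  qed
  then have eqts: "x' ts = x ts" "h' ts = h ts" "n' ts = n ts" using e_eq by auto
  define \<rho> where "\<rho> = min (1/2) (min (hmin/2) (1 / (2 * (1 + eta P))))"
  have \<rho>0: "\<rho> > 0" using hmin0 p by (simp add: \<rho>_def)
  have \<rho>h: "\<rho> \<le> hmin / 2" by (simp add: \<rho>_def)
  have \<rho>e: "\<rho> * (1 + eta P) \<le> 1/2"
  proof -
    have "\<rho> \<le> 1 / (2 * (1 + eta P))" by (simp add: \<rho>_def)
    then have "\<rho> * (1 + eta P) \<le> 1 / (2 * (1 + eta P)) * (1 + eta P)"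
      using p by (intro mult_right_mono) auto
    also have "\<dots> = 1/2" using p by simp
    finally show ?thesis .
  qed
  have close: "\<exists>d>0. \<forall>t\<in>{0..}. dist t ts < d \<longrightarrow> dist (u t) (u ts) < \<rho>"
    if "\<And>s. s \<ge> 0 \<Longrightarrow> (u has_real_derivative u' s) (at s within {0..})" for u u'
  proof -
    have "continuous (at ts within {0..}) u" using that[OF ts0] by (rule DERIV_continuous)
    then show ?thesis using \<rho>0 unfolding continuous_within_eps_delta by blast
  qed
  obtain dX where dX: "dX > 0" "\<forall>t\<in>{0..}. dist t ts < dX \<longrightarrow> dist (x' t) (x' ts) < \<rho>" using close[OF dx'] by blast
  obtain dH where dH: "dH > 0" "\<forall>t\<in>{0..}. dist t ts < dH \<longrightarrow> dist (h' t) (h' ts) < \<rho>" using close[OF dh'] by blast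
  obtain dN where dN: "dN > 0" "\<forall>t\<in>{0..}. dist t ts < dN \<longrightarrow> dist (n' t) (n' ts) < \<rho>" using close[OF dn'] by blast
  define d0 where "d0 = min dX (min dH dN)"
  have d0: "d0 > 0" using dX dH dN by (simp add: d0_def)
  define B' where "B' = box3 (-\<rho>) (1+\<rho>) (hmin-\<rho>) (hmax+\<rho>) (-\<rho>) (1+\<rho>)"
  have hl': "hmin - \<rho> > 0" using \<rho>h hmin0 by simp
  have nl': "1 + eta P * (-\<rho>) > 0"
  proof -
    have "eta P * \<rho> \<le> \<rho> * (1 + eta P)" using \<rho>0 by (simp add: algebra_simps)
    then show ?thesis using \<rho>e by simp
  qed
  note LBs = f_LB[OF P hl' nl', of "-\<rho>" "1+\<rho>" "hmax+\<rho>" "1+\<rho>", folded B'_def]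
  obtain Kx Lx where X: "Lx \<ge> 0"
    "\<And>p q. p \<in> B' \<Longrightarrow> q \<in> B' \<Longrightarrow> \<bar>fx P (fst p) (fst (snd p)) (snd (snd p)) - fx P (fst q) (fst (snd q)) (snd (snd q))\<bar> \<le> Lx * dd p q"
    using LBE[OF LBs(1)] by metis
  obtain Kh Lh where Hh: "Lh \<ge> 0"
    "\<And>p q. p \<in> B' \<Longrightarrow> q \<in> B' \<Longrightarrow> \<bar>fh P (fst p) (fst (snd p)) (snd (snd p)) - fh P (fst q) (fst (snd q)) (snd (snd q))\<bar> \<le> Lh * dd p q"
    using LBE[OF LBs(2)] by metis
  obtain Kn Ln where N: "Ln \<ge> 0"
    "\<And>p q. p \<in> B' \<Longrightarrow> q \<in> B' \<Longrightarrow> \<bar>fn P (fst p) (fst (snd p)) (snd (snd p)) - fn P (fst q) (fst (snd q)) (snd (snd q))\<bar> \<le> Ln * dd p q"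
    using LBE[OF LBs(3)] by metis
  have YB: "Y t \<in> B'" if "t \<ge> 0" for t
    using inB[OF that] \<rho>0 by (simp add: Y_def B'_def box3_def)
  have Y'B: "Y' t \<in> B'" if "t \<ge> 0" "t < ts + d0" "ts \<le> t" for t
  proof -
    have dt: "dist t ts < d0" using that by (simp add: dist_real_def)
    have "\<bar>x' t - x' ts\<bar> < \<rho>" "\<bar>h' t - h' ts\<bar> < \<rho>" "\<bar>n' t - n' ts\<bar> < \<rho>"
      using dX(2) dH(2) dN(2) dt that(1) by (auto simp: d0_def dist_real_def)
    moreover have "0 \<le> x ts \<and> x ts \<le> 1 \<and> hmin \<le> h ts \<and> h ts \<le> hmax \<and> 0 \<le> n ts \<and> n ts \<le> 1"
      by (rule inB[OF ts0])
    ultimately show ?thesis using eqts by (auto simp: Y'_def B'_def box3_def abs_less_iff)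
  qed
  define Ls where "Ls = Lx + Lh + Ln"
  have Ls0: "Ls \<ge> 0" using X Hh N by (simp add: Ls_def)
  define \<delta> where "\<delta> = min (d0/2) (1 / (2 * (Ls + 1)))"
  have \<delta>0: "\<delta> > 0" using d0 Ls0 by (simp add: \<delta>_def)
  have \<delta>d: "\<delta> < d0" using d0 by (simp add: \<delta>_def)
  have \<delta>L: "Ls * \<delta> \<le> 1/2"
  proof -
    have "\<delta> \<le> 1 / (2 * (Ls + 1))" by (simp add: \<delta>_def)
    then have "Ls * \<delta> \<le> Ls * (1 / (2 * (Ls + 1)))" using Ls0 by (intro mult_left_mono)
    also have "\<dots> \<le> 1/2" using Ls0 by (simp add: field_simps)
    finally show ?thesis .
  qed
  define I where "I = {ts..ts+\<delta>}"
  have cI: "continuous_on I e" unfolding I_def by (rule continuous_on_subset[OF ce]) (use ts0 in auto)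
  obtain tau where tau: "tau \<in> I" "\<And>s. s \<in> I \<Longrightarrow> e s \<le> e tau"
    using continuous_attains_sup[OF _ _ cI] \<delta>0 unfolding I_def by (metis atLeastAtMost_iff compact_Icc empty_iff less_eq_real_def less_add_same_cancel1 order_refl)
  define M where "M = e tau"
  have tauI: "ts \<le> tau" "tau \<le> ts + \<delta>" using tau(1) by (auto simp: I_def)
  have inner: "ts < s \<Longrightarrow> s < tau \<Longrightarrow> Y s \<in> B' \<and> Y' s \<in> B' \<and> e s \<le> M" for s
    using YB[of s] Y'B[of s] tau(2)[of s] ts0 tauI \<delta>d unfolding M_def I_def by auto
  have cX: "\<bar>x tau - x' tau\<bar> \<le> (Lx * M) * (tau - ts)"
  proof (rule comp_bound[OF ts0 tauI(1) dx dx'])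
    fix s assume s: "ts < s" "s < tau"
    have "\<bar>fX s - fX' s\<bar> \<le> Lx * dd (Y s) (Y' s)"
      using X(2)[of "Y s" "Y' s"] inner[OF s] by (simp add: fX_def fX'_def Y_def Y'_def)
    also have "\<dots> \<le> Lx * M" using inner[OF s] X(1) by (simp add: eY[symmetric] mult_left_mono)
    finally show "\<bar>fX s - fX' s\<bar> \<le> Lx * M" .
  next
    show "x ts = x' ts" using eqts by simp
  qed
  have cH: "\<bar>h tau - h' tau\<bar> \<le> (Lh * M) * (tau - ts)"
  proof (rule comp_bound[OF ts0 tauI(1) dh dh'])
    fix s assume s: "ts < s" "s < tau"
    have "\<bar>fH s - fH' s\<bar> \<le> Lh * dd (Y s) (Y' s)"
      using Hh(2)[of "Y s" "Y' s"] inner[OF s] by (simp add: fH_def fH'_def Y_def Y'_def)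
    also have "\<dots> \<le> Lh * M" using inner[OF s] Hh(1) by (simp add: eY[symmetric] mult_left_mono)
    finally show "\<bar>fH s - fH' s\<bar> \<le> Lh * M" .
  next
    show "h ts = h' ts" using eqts by simp
  qed
  have cN: "\<bar>n tau - n' tau\<bar> \<le> (Ln * M) * (tau - ts)"
  proof (rule comp_bound[OF ts0 tauI(1) dn dn'])
    fix s assume s: "ts < s" "s < tau"
    have "\<bar>fN s - fN' s\<bar> \<le> Ln * dd (Y s) (Y' s)"
      using N(2)[of "Y s" "Y' s"] inner[OF s] by (simp add: fN_def fN'_def Y_def Y'_def)
    also have "\<dots> \<le> Ln * M" using inner[OF s] N(1) by (simp add: eY[symmetric] mult_left_mono)
    finally show "\<bar>fN s - fN' s\<bar> \<le> Ln * M" .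
  next
    show "n ts = n' ts" using eqts by simp
  qed
  have M0: "M \<ge> 0" by (simp add: M_def e0)
  have "M \<le> (Ls * M) * (tau - ts)"
    using cX cH cN unfolding M_def e_def Ls_def by (simp add: algebra_simps)
  also have "\<dots> \<le> (Ls * M) * \<delta>" by (rule mult_left_mono) (use tauI Ls0 M0 in auto)
  also have "\<dots> = (Ls * \<delta>) * M" by (simp add: algebra_simps)
  also have "\<dots> \<le> (1/2) * M" by (rule mult_right_mono[OF \<delta>L M0])
  finally have "M \<le> 0" by simp
  then have ezero: "e s = 0" if "s \<in> I" for s using tau(2)[OF that] e0[of s] unfolding M_def by simp
  have "ts < ts + \<delta>" using \<delta>0 by simp
  then obtain a where a: "a \<in> A" "a < ts + \<delta>"
    using cInf_less_iff[OF Ane Abd] unfolding ts_def by blast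
  have "ts \<le> a" unfolding ts_def by (rule cInf_lower[OF a(1) Abd])
  then have "a \<in> I" using a(2) by (simp add: I_def)
  then have "e a = 0" by (rule ezero)
  then show False using a(1) by (simp add: A_def)
qed

theorem theorem1:
  fixes P :: params and x0 h0 n0 :: real
  assumes "params_ok P"
    and "0 \<le> x0" "x0 \<le> 1" "h0 > 0" "0 \<le> n0" "n0 \<le> 1"
  shows "\<exists>x h n. is_solution P x h n \<and> x 0 = x0 \<and> h 0 = h0 \<and> n 0 = n0 \<and>
           (\<forall>t\<ge>0. 0 \<le> x t \<and> x t \<le> 1 \<and> h t > 0 \<and> 0 \<le> n t \<and> n t \<le> 1) \<and>
           (\<forall>x' h' n'. is_solution P x' h' n' \<and> x' 0 = x0 \<and> h' 0 = h0 \<and> n' 0 = n0 \<and>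
                (\<forall>t\<ge>0. h' t > 0) \<longrightarrow>
              (\<forall>t\<ge>0. x' t = x t \<and> h' t = h t \<and> n' t = n t))"
proof -
  define hmin where "hmin = min h0 1"
  define hmax where "hmax = max h0 (1 + alpha P * (1 + beta P) * (1 + eta P) / gamma0 P)"
  have hmin0: "hmin > 0" using assms(4) by (simp add: hmin_def)
  obtain x h n where sol: "is_solution P x h n" and init: "x 0 = x0" "h 0 = h0" "n 0 = n0"
    and inB: "\<forall>t\<ge>0. 0 \<le> x t \<and> x t \<le> 1 \<and> hmin \<le> h t \<and> h t \<le> hmax \<and> 0 \<le> n t \<and> n t \<le> 1"
    using existence[OF assms, folded hmin_def hmax_def] by blast
  have pos: "\<forall>t\<ge>0. 0 \<le> x t \<and> x t \<le> 1 \<and> h t > 0 \<and> 0 \<le> n t \<and> n t \<le> 1"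
    using inB hmin0 by force
  have uniq: "\<forall>x' h' n'. is_solution P x' h' n' \<and> x' 0 = x0 \<and> h' 0 = h0 \<and> n' 0 = n0 \<and>
                (\<forall>t\<ge>0. h' t > 0) \<longrightarrow>
              (\<forall>t\<ge>0. x' t = x t \<and> h' t = h t \<and> n' t = n t)"
  proof (rule allI, rule allI, rule allI, rule impI)
    fix x' h' n'
    assume H: "is_solution P x' h' n' \<and> x' 0 = x0 \<and> h' 0 = h0 \<and> n' 0 = n0 \<and> (\<forall>t\<ge>0. h' t > 0)"
    have s': "is_solution P x' h' n'" using H by blast
    have i: "x' 0 = x 0" "h' 0 = h 0" "n' 0 = n 0" using H init by auto
    have ib: "\<And>t. t \<ge> 0 \<Longrightarrow> 0 \<le> x t \<and> x t \<le> 1 \<and> hmin \<le> h t \<and> h t \<le> hmax \<and> 0 \<le> n t \<and> n t \<le> 1"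
      using inB by blast
    show "\<forall>t\<ge>0. x' t = x t \<and> h' t = h t \<and> n' t = n t"
      by (rule uniqueness[OF assms(1) sol ib hmin0 s' i])
  qed
  show ?thesis using sol init pos uniq by blast
qed

end
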